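(* Let $X_1,\dots,X_n$ be $\mathbb{R}^d$-valued random vectors with sufficiently smooth joint density $p$ on $(\mathbb{R}^d)^n$, let $W=X_1+\dots+X_n$, let $J=I(W)$ be the Fisher information of $W$, and let $\mathbf{I}=(I_{ij})_{i,j=1}^n$ be the Fisher information matrix of $X=(X_1,\dots,X_n)$. Then for every $(\lambda_1,\dots,\lambda_n)\in\mathbb{R}^n$, $$ \Big(\sum_{i=1}^n \lambda_i\Big)^2 J \leq \sum_{i,j=1}^n \lambda_i\lambda_j I_{ij}. $$ Furthermore, when the matrix $\mathbf{I}$ is invertible, $$ \frac{1}{J}\geq \langle \mathbf{1}, \mathbf{I}^{-1}\mathbf{1}\rangle, $$ where $\mathbf{1}=(1,\dots,1)\in\mathbb{R}^n$.
   Context: For a random vector $V$ in $\mathbb{R}^m$ with smooth density $q$, its Fisher information is $I(V)=\int \frac{|\nabla q|^2}{q}$. For $X=(X_1,\dots,X_n)$ with joint density $p$ on $(\mathbb{R}^d)^n$, write $x=(x_1,\dots,x_n)$, $x_i\in\mathbb{R}^d$, let $\nabla_i$ be the gradient with respect to $x_i$, and set $\rho_i=-\nabla_i p/p\in\mathbb{R}^d$. The Fisher information matrix is the $n\times n$ matrix with entries $I_{ij}=I_{ij}(X)=\mathbb{E}\langle\rho_i(X),\rho_j(X)\rangle$, where $\langle\cdot,\cdot\rangle$ is the Euclidean inner product. Standing assumptions: finite second moments and finite entropies. *)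

theory Defs
  imports "HOL-Analysis.Analysis" "HOL-Probability.Probability"
begin

text \<open>Points of (R^d)^n are represented as elements of real^'d^'n:
  x $ i :: real^'d is the i-th block x_i.\<close>

definition grad :: "(real^'d \<Rightarrow> real) \<Rightarrow> real^'d \<Rightarrow> real^'d" where
  "grad q w = (\<chi> k. frechet_derivative q (at w) (axis k 1))"

definition partial_grad :: "(real^'d^'n \<Rightarrow> real) \<Rightarrow> 'n \<Rightarrow> real^'d^'n \<Rightarrow> real^'d" where
  "partial_grad p i x = (\<chi> k. frechet_derivative p (at x) (axis i (axis k 1)))"

text \<open>Fisher information I(V) = int |grad q|^2 / q  (integrand is 0 where q = 0,
  by the HOL convention x / 0 = 0).\<close>
definition fisher_info :: "(real^'d \<Rightarrow> real) \<Rightarrow> real" where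
  "fisher_info q = (\<integral>w. (norm (grad q w))\<^sup>2 / q w \<partial>lborel)"

text \<open>Entries I_ij = E <rho_i(X), rho_j(X)> = int <nabla_i p, nabla_j p> / p.\<close>
definition fisher_entry :: "(real^'d^'n \<Rightarrow> real) \<Rightarrow> 'n \<Rightarrow> 'n \<Rightarrow> real" where
  "fisher_entry p i j = (\<integral>x. (partial_grad p i x \<bullet> partial_grad p j x) / p x \<partial>lborel)"

definition fisher_matrix :: "(real^'d^'n \<Rightarrow> real) \<Rightarrow> real^'n^'n" where
  "fisher_matrix p = (\<chi> i j. fisher_entry p i j)"

end

theory Submission
  imports Defs
begin


lemma lborel_integral_translate:
  fixes f :: "'a::euclidean_space \<Rightarrow> real"
  assumes [measurable]: "f \<in> borel_measurable borel"
  shows "(\<integral>x. f (x + c) \<partial>lborel) = (\<integral>x. f x \<partial>lborel)"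
proof -
  have "(\<integral>x. f x \<partial>lborel) = (\<integral>x. f x \<partial>distr lborel borel ((+) c))" by (simp add: lborel_distr_plus)
  also have "\<dots> = (\<integral>x. f (c + x) \<partial>lborel)"
    by (rule integral_distr) auto
  finally show ?thesis by (simp add: add.commute)
qed

lemma lborel_integrable_translate:
  fixes f :: "'a::euclidean_space \<Rightarrow> real"
  assumes [measurable]: "f \<in> borel_measurable borel"
  shows "integrable lborel (\<lambda>x. f (x + c)) \<longleftrightarrow> integrable lborel f"
proof -
  have "integrable lborel f \<longleftrightarrow> integrable (distr lborel borel ((+) c)) f" by (simp add: lborel_distr_plus)
  also have "\<dots> \<longleftrightarrow> integrable lborel (\<lambda>x. f (c + x))"
    by (rule integrable_distr_eq) auto
  finally show ?thesis by (simp add: add.commute)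
qed

lemma FTC_line:
  fixes f :: "'a::euclidean_space \<Rightarrow> real"
  assumes diff: "\<And>y. f differentiable (at y)"
    and cont: "continuous_on UNIV (\<lambda>y. frechet_derivative f (at y) v)"
    and t: "0 \<le> t"
  shows "f (x + t *\<^sub>R v) - f x = (\<integral>s. indicator {0..t} s * frechet_derivative f (at (x + s *\<^sub>R v)) v \<partial>lborel)"
proof -
  define D where "D y = frechet_derivative f (at y) v" for y
  have der: "((\<lambda>s. f (x + s *\<^sub>R v)) has_vector_derivative D (x + s *\<^sub>R v)) (at s within S)" for s S
  proof -
    have f1: "(f has_derivative frechet_derivative f (at (x + s *\<^sub>R v))) (at (x + s *\<^sub>R v))"
      using diff frechet_derivative_works by blast
    have l: "linear (frechet_derivative f (at (x + s *\<^sub>R v)))"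
      using f1 has_derivative_linear by blast
    have g: "((\<lambda>s. x + s *\<^sub>R v) has_derivative (\<lambda>h. h *\<^sub>R v)) (at s within S)"
      by (rule has_derivative_add_const[where c=x, simplified add.commute]) (rule has_derivative_scaleR_left[OF has_derivative_ident])
    have "((\<lambda>s. f (x + s *\<^sub>R v)) has_derivative (\<lambda>h. frechet_derivative f (at (x + s *\<^sub>R v)) (h *\<^sub>R v))) (at s within S)"
      by (rule has_derivative_compose[OF g f1])
    moreover have "(\<lambda>h. frechet_derivative f (at (x + s *\<^sub>R v)) (h *\<^sub>R v)) = (\<lambda>h. h *\<^sub>R D (x + s *\<^sub>R v))"
      using l by (auto simp: D_def linear_scale)
    ultimately show ?thesis unfolding has_vector_derivative_def by simp
  qed
  have c: "continuous_on {min 0 t..max 0 t} (\<lambda>s. D (x + s *\<^sub>R v))"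
    using cont unfolding D_def
    by (intro continuous_on_compose2[OF cont]) (auto intro!: continuous_intros)
  have "(LBINT s=ereal 0..ereal t. D (x + s *\<^sub>R v)) = f (x + t *\<^sub>R v) - f (x + 0 *\<^sub>R v)"
    by (rule interval_integral_FTC_finite[OF c]) (rule der)
  also have "(LBINT s=ereal 0..ereal t. D (x + s *\<^sub>R v)) = (LBINT s:{0..t}. D (x + s *\<^sub>R v))"
    using t by (rule interval_integral_Icc)
  finally show ?thesis by (simp add: set_lebesgue_integral_def D_def mult.commute)
qed

lemma zero_from_integrals:
  fixes g :: "real \<Rightarrow> real"
  assumes c: "continuous_on UNIV g" and z: "\<And>t. 0 \<le> t \<Longrightarrow> (\<integral>s. indicator {0..t} s * g s \<partial>lborel) = 0"
  shows "g 0 = 0"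
proof -
  have c1: "continuous_on {0..1} g" using c continuous_on_subset by blast
  have d: "((\<lambda>u. LBINT y=ereal 0..ereal u. g y) has_vector_derivative g 0) (at 0 within {0..1})"
    by (rule interval_integral_FTC2[OF _ _ c1]) auto
  have e: "(LBINT y=ereal 0..ereal u. g y) = 0" if "u \<in> {0..1}" for u
  proof -
    have "(LBINT y=ereal 0..ereal u. g y) = (LBINT y:{0..u}. g y)" using that by (intro interval_integral_Icc) auto
    also have "\<dots> = 0" using z[of u] that by (simp add: set_lebesgue_integral_def)
    finally show ?thesis .
  qed
  have d2: "((\<lambda>u. 0::real) has_vector_derivative g 0) (at 0 within {0..1})"
    by (rule has_vector_derivative_transform[OF _ _ d]) (use e in auto)
  have d3: "((\<lambda>u. 0::real) has_vector_derivative 0) (at 0 within {0..1})"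
    by (rule has_vector_derivative_const)
  show ?thesis
    using vector_derivative_unique_within_closed_interval[of 0 1 0 "\<lambda>u. 0::real" "g 0" 0] d2 d3
    by simp
qed

lemma line_fubini:
  fixes f D :: "'a::euclidean_space \<Rightarrow> real" and \<psi> :: "'a \<Rightarrow> real"
  assumes diff: "\<And>y. f differentiable (at y)"
    and Ddef: "\<And>y. D y = frechet_derivative f (at y) v"
    and cont: "continuous_on UNIV D"
    and intD: "integrable lborel D"
    and \<psi>c: "continuous_on UNIV \<psi>" and \<psi>b: "\<And>x. \<bar>\<psi> x\<bar> \<le> B"
    and t: "0 \<le> t"
  shows "integrable lborel (\<lambda>x. (f (x + t *\<^sub>R v) - f x) * \<psi> x)"
    and "(\<integral>x. (f (x + t *\<^sub>R v) - f x) * \<psi> x \<partial>lborel)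
          = (\<integral>s. indicator {0..t} s * (\<integral>x. D x * \<psi> (x - s *\<^sub>R v) \<partial>lborel) \<partial>lborel)"
proof -
  have Dm[measurable]: "D \<in> borel_measurable borel" using cont by (rule borel_measurable_continuous_onI)
  have \<psi>m[measurable]: "\<psi> \<in> borel_measurable borel" using \<psi>c by (rule borel_measurable_continuous_onI)
  have B0: "0 \<le> B" using \<psi>b[of 0] by linarith
  define F where "F = (\<lambda>(s::real, x::'a). indicator {0..t} s * D (x + s *\<^sub>R v) * \<psi> x)"
  have Fm[measurable]: "F \<in> borel_measurable (lborel \<Otimes>\<^sub>M lborel)"
    unfolding F_def by measurable
  have intDs: "integrable lborel (\<lambda>x. D (x + c))" for c
    using intD lborel_integrable_translate[OF Dm] by blast
  have intFs: "integrable lborel (\<lambda>x. D (x + s *\<^sub>R v) * \<psi> x)" for s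
  proof (rule Bochner_Integration.integrable_bound[where f="\<lambda>x. B * D (x + s *\<^sub>R v)"])
    show "integrable lborel (\<lambda>x. B * D (x + s *\<^sub>R v))" using intDs by simp
    show "(\<lambda>x. D (x + s *\<^sub>R v) * \<psi> x) \<in> borel_measurable lborel" by measurable
    show "AE x in lborel. norm (D (x + s *\<^sub>R v) * \<psi> x) \<le> norm (B * D (x + s *\<^sub>R v))"
    proof (rule AE_I2)
      fix x
      have "\<bar>D (x + s *\<^sub>R v)\<bar> * \<bar>\<psi> x\<bar> \<le> \<bar>D (x + s *\<^sub>R v)\<bar> * B"
        by (rule mult_left_mono[OF \<psi>b]) simp
      then show "norm (D (x + s *\<^sub>R v) * \<psi> x) \<le> norm (B * D (x + s *\<^sub>R v))"
        using B0 by (simp add: abs_mult mult.commute)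
    qed
  qed
  have nD: "(\<integral>x. norm (D (x + c)) \<partial>lborel) = (\<integral>x. norm (D x) \<partial>lborel)" for c
    by (rule lborel_integral_translate[of "\<lambda>x. norm (D x)"]) measurable
  have integ1: "integrable lborel (\<lambda>s. \<integral>x. norm (F (s, x)) \<partial>lborel)"
  proof (rule Bochner_Integration.integrable_bound[where f="\<lambda>s. B * (\<integral>x. norm (D x) \<partial>lborel) * indicator {0..t} s"])
    show "integrable lborel (\<lambda>s. B * (\<integral>x. norm (D x) \<partial>lborel) * indicator {0..t} s)"
      by (rule borel_integrable_atLeastAtMost) auto
    show "(\<lambda>s. \<integral>x. norm (F (s, x)) \<partial>lborel) \<in> borel_measurable lborel"
      by measurable
    show "AE s in lborel. norm (\<integral>x. norm (F (s, x)) \<partial>lborel) \<le> norm (B * (\<integral>x. norm (D x) \<partial>lborel) * indicator {0..t} s)"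
    proof (rule AE_I2)
      fix s :: real
      have e1: "(\<integral>x. norm (F (s, x)) \<partial>lborel) = indicator {0..t} s * (\<integral>x. norm (D (x + s *\<^sub>R v) * \<psi> x) \<partial>lborel)"
        by (auto simp: F_def split: split_indicator simp: abs_mult)
      have i1: "integrable lborel (\<lambda>x. norm (D (x + s *\<^sub>R v) * \<psi> x))"
        using integrable_norm[OF intFs[of s]] .
      have e2: "(\<integral>x. norm (D (x + s *\<^sub>R v) * \<psi> x) \<partial>lborel) \<le> (\<integral>x. B * norm (D (x + s *\<^sub>R v)) \<partial>lborel)"
        by (rule integral_mono[OF i1]) (auto simp: abs_mult intro!: intDs mult_right_mono[OF \<psi>b, simplified mult.commute] )
      have e3: "(\<integral>x. B * norm (D (x + s *\<^sub>R v)) \<partial>lborel) = B * (\<integral>x. norm (D x) \<partial>lborel)" using nD by simp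
      have e4: "0 \<le> (\<integral>x. norm (D (x + s *\<^sub>R v) * \<psi> x) \<partial>lborel)" by (rule integral_nonneg_AE) auto
      show "norm (\<integral>x. norm (F (s, x)) \<partial>lborel) \<le> norm (B * (\<integral>x. norm (D x) \<partial>lborel) * indicator {0..t} s)"
        using B0 e1 e2 e3 e4 by (auto split: split_indicator)
    qed
  qed
  have integ2: "AE s in lborel. integrable lborel (\<lambda>x. F (s, x))"
    by (auto simp: F_def mult.assoc intro!: intFs)
  have intF: "integrable (lborel \<Otimes>\<^sub>M lborel) F"
    by (rule lborel_pair.Fubini_integrable[OF Fm integ1 integ2])
  define G where "G = (\<lambda>(x::'a, s::real). F (s, x))"
  have intG: "integrable (lborel \<Otimes>\<^sub>M lborel) G"
    using lborel_pair.integrable_product_swap[OF intF] by (simp add: G_def case_prod_beta')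
  have inner_s: "(\<integral>s. G (x, s) \<partial>lborel) = (f (x + t *\<^sub>R v) - f x) * \<psi> x" for x
  proof -
    have "(\<integral>s. G (x, s) \<partial>lborel) = (\<integral>s. indicator {0..t} s * D (x + s *\<^sub>R v) \<partial>lborel) * \<psi> x"
      by (simp add: G_def F_def)
    also have "\<dots> = (f (x + t *\<^sub>R v) - f x) * \<psi> x"
      using FTC_line[OF diff _ t, of v x] cont by (simp add: Ddef[abs_def])
    finally show ?thesis .
  qed
  have inner_x: "(\<integral>x. G (x, s) \<partial>lborel) = indicator {0..t} s * (\<integral>x. D x * \<psi> (x - s *\<^sub>R v) \<partial>lborel)" for s
  proof -
    have "(\<integral>x. G (x, s) \<partial>lborel) = indicator {0..t} s * (\<integral>x. D (x + s *\<^sub>R v) * \<psi> x \<partial>lborel)"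
      by (simp add: G_def F_def mult.assoc)
    also have "(\<integral>x. D (x + s *\<^sub>R v) * \<psi> x \<partial>lborel) = (\<integral>x. D x * \<psi> (x - s *\<^sub>R v) \<partial>lborel)"
      using lborel_integral_translate[of "\<lambda>x. D x * \<psi> (x - s *\<^sub>R v)" "s *\<^sub>R v"] by simp
    finally show ?thesis .
  qed
  show "integrable lborel (\<lambda>x. (f (x + t *\<^sub>R v) - f x) * \<psi> x)"
    using lborel_pair.integrable_fst'[OF intG] by (simp add: inner_s)
  have "(\<integral>s. (\<integral>x. G (x, s) \<partial>lborel) \<partial>lborel) = (\<integral>x. (\<integral>s. G (x, s) \<partial>lborel) \<partial>lborel)"
    using lborel_pair.Fubini_integral[of "\<lambda>x s. G (x, s)"] intG by simp
  then show "(\<integral>x. (f (x + t *\<^sub>R v) - f x) * \<psi> x \<partial>lborel)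
          = (\<integral>s. indicator {0..t} s * (\<integral>x. D x * \<psi> (x - s *\<^sub>R v) \<partial>lborel) \<partial>lborel)"
    by (simp add: inner_s inner_x)
qed

lemma translate_cont:
  fixes D \<psi> :: "'a::euclidean_space \<Rightarrow> real"
  assumes intD: "integrable lborel D"
    and \<psi>c: "continuous_on UNIV \<psi>" and \<psi>b: "\<And>x. \<bar>\<psi> x\<bar> \<le> B"
  shows "continuous_on UNIV (\<lambda>s::real. \<integral>x. D x * \<psi> (x - s *\<^sub>R v) \<partial>lborel)"
proof (rule continuous_on_sequentiallyI)
  fix u :: "nat \<Rightarrow> real" and a assume u: "u \<longlonglongrightarrow> a"
  have \<psi>m[measurable]: "\<psi> \<in> borel_measurable borel" using \<psi>c by (rule borel_measurable_continuous_onI)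
  have Dm[measurable]: "D \<in> borel_measurable lborel" using intD by auto
  show "(\<lambda>n. \<integral>x. D x * \<psi> (x - u n *\<^sub>R v) \<partial>lborel) \<longlonglongrightarrow> (\<integral>x. D x * \<psi> (x - a *\<^sub>R v) \<partial>lborel)"
  proof (rule integral_dominated_convergence[where w="\<lambda>x. B * norm (D x)"])
    show "(\<lambda>x. D x * \<psi> (x - a *\<^sub>R v)) \<in> borel_measurable lborel" by measurable
    show "(\<lambda>x. D x * \<psi> (x - u n *\<^sub>R v)) \<in> borel_measurable lborel" for n by measurable
    show "integrable lborel (\<lambda>x. B * norm (D x))" using intD by auto
    show "AE x in lborel. (\<lambda>n. D x * \<psi> (x - u n *\<^sub>R v)) \<longlonglongrightarrow> D x * \<psi> (x - a *\<^sub>R v)"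
    proof (rule AE_I2)
      fix x
      have "(\<lambda>n. x - u n *\<^sub>R v) \<longlonglongrightarrow> x - a *\<^sub>R v" by (intro tendsto_intros u)
      moreover have "isCont \<psi> (x - a *\<^sub>R v)" using \<psi>c by (simp add: continuous_on_eq_continuous_at)
      ultimately have "(\<lambda>n. \<psi> (x - u n *\<^sub>R v)) \<longlonglongrightarrow> \<psi> (x - a *\<^sub>R v)"
        using isCont_tendsto_compose by blast
      then show "(\<lambda>n. D x * \<psi> (x - u n *\<^sub>R v)) \<longlonglongrightarrow> D x * \<psi> (x - a *\<^sub>R v)"
        by (intro tendsto_intros)
    qed
    show "AE x in lborel. norm (D x * \<psi> (x - u n *\<^sub>R v)) \<le> B * norm (D x)" for n
    proof (rule AE_I2)
      fix x
      have "\<bar>D x\<bar> * \<bar>\<psi> (x - u n *\<^sub>R v)\<bar> \<le> \<bar>D x\<bar> * B" by (rule mult_left_mono[OF \<psi>b]) simp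
      then show "norm (D x * \<psi> (x - u n *\<^sub>R v)) \<le> B * norm (D x)" by (simp add: abs_mult mult.commute)
    qed
  qed
qed

lemma amgm_div:
  fixes a c :: real
  assumes "0 \<le> c" "c = 0 \<Longrightarrow> a = 0"
  shows "\<bar>a\<bar> \<le> (a\<^sup>2 / c + c) / 2"
proof (cases "c = 0")
  case True then show ?thesis using assms by simp
next
  case False
  then have c: "c > 0" using assms by simp
  have "0 \<le> (\<bar>a\<bar> - c)\<^sup>2 / c" using c by simp
  also have "(\<bar>a\<bar> - c)\<^sup>2 / c = a\<^sup>2 / c + c - 2 * \<bar>a\<bar>"
    using c by (simp add: field_simps power2_eq_square)
  finally show ?thesis by simp
qed

lemma deriv_zero_at_min:
  fixes g :: "'a::euclidean_space \<Rightarrow> real"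
  assumes "\<And>y. 0 \<le> g y" "g w = 0" "g differentiable (at w)"
  shows "frechet_derivative g (at w) = (\<lambda>v. 0)"
proof -
  have "(g has_derivative frechet_derivative g (at w)) (at w)"
    using assms(3) frechet_derivative_works by blast
  then show ?thesis
    using differential_zero_maxmin[of w UNIV g] assms by auto
qed

lemma sum_axis_vec: "(\<Sum>j\<in>UNIV. axis i e $ j) = (e :: 'a::real_vector)"
  by (simp add: axis_def sum.delta)

lemma sum_vec_linear:
  fixes x v :: "'a::real_vector ^ 'n"
  shows "(\<Sum>j\<in>UNIV. (x + s *\<^sub>R v) $ j) = (\<Sum>j\<in>UNIV. x $ j) + s *\<^sub>R (\<Sum>j\<in>UNIV. v $ j)"
  by (simp add: sum.distrib scaleR_sum_right)

lemma sum_vec_linear':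
  fixes x v :: "'a::real_vector ^ 'n"
  shows "(\<Sum>j\<in>UNIV. (x - s *\<^sub>R v) $ j) = (\<Sum>j\<in>UNIV. x $ j) - s *\<^sub>R (\<Sum>j\<in>UNIV. v $ j)"
  by (simp add: sum_subtractf scaleR_sum_right)

lemma cont_sumS: "continuous_on UNIV (\<lambda>x::'a::real_normed_vector^'n. \<Sum>j\<in>UNIV. x $ j)"
  by (intro continuous_intros)


locale fisher_setting =
  fixes p :: "real^'d^'n \<Rightarrow> real" and q :: "real^'d \<Rightarrow> real"
  assumes p_nonneg: "\<And>x. 0 \<le> p x"
    and p_int: "integrable lborel p" and p_one: "(\<integral>x. p x \<partial>lborel) = 1"
    and p_diff: "\<And>x. p differentiable (at x)"
    and p_C1: "\<And>i. continuous_on UNIV (partial_grad p i)"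
    and q_nonneg: "\<And>w. 0 \<le> q w"
    and W_density: "distributed (density lborel (\<lambda>x. ennreal (p x))) lborel
                       (\<lambda>x. \<Sum>i\<in>UNIV. x $ i) (\<lambda>w. ennreal (q w))"
    and q_diff: "\<And>w. q differentiable (at w)"
    and q_C1: "continuous_on UNIV (grad q)"
    and fisher_X_finite: "\<And>i. integrable lborel (\<lambda>x. (norm (partial_grad p i x))\<^sup>2 / p x)"
    and fisher_W_finite: "integrable lborel (\<lambda>w. (norm (grad q w))\<^sup>2 / q w)"
begin

lemma p_meas[measurable]: "p \<in> borel_measurable borel"
  by (rule borel_measurable_continuous_onI, rule differentiable_imp_continuous_on)
     (use p_diff in \<open>auto simp: differentiable_on_def differentiable_at_withinI\<close>)

lemma q_meas[measurable]: "q \<in> borel_measurable borel"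
  by (rule borel_measurable_continuous_onI, rule differentiable_imp_continuous_on)
     (use q_diff in \<open>auto simp: differentiable_on_def differentiable_at_withinI\<close>)

lemma S_meas[measurable]: "(\<lambda>x::real^'d^'n. \<Sum>i\<in>UNIV. x $ i) \<in> borel_measurable borel"
  by (rule borel_measurable_continuous_onI[OF cont_sumS])

lemma push:
  assumes [measurable]: "g \<in> borel_measurable borel"
  shows "(\<integral>w. q w * g w \<partial>lborel) = (\<integral>x. p x * g (\<Sum>i\<in>UNIV. x $ i) \<partial>lborel)"
proof -
  have "(\<integral>w. q w * g w \<partial>lborel) = (\<integral>x. g (\<Sum>i\<in>UNIV. x $ i) \<partial>density lborel (\<lambda>x. ennreal (p x)))"
    by (rule distributed_integral[OF W_density]) (auto simp: q_nonneg)
  also have "\<dots> = (\<integral>x. p x * g (\<Sum>i\<in>UNIV. x $ i) \<partial>lborel)"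
    by (subst integral_density) (auto simp: p_nonneg)
  finally show ?thesis .
qed

lemma q_int: "integrable lborel q"
proof (rule integrableI_nonneg)
  show "q \<in> borel_measurable lborel" by simp
  show "AE x in lborel. 0 \<le> q x" by (simp add: q_nonneg)
  have "(\<integral>\<^sup>+w. ennreal (q w) * 1 \<partial>lborel) = (\<integral>\<^sup>+x. 1 \<partial>density lborel (\<lambda>x. ennreal (p x)))"
    by (rule distributed_nn_integral[OF W_density]) simp
  also have "\<dots> = (\<integral>\<^sup>+x. ennreal (p x) \<partial>lborel)"
    by (subst nn_integral_density) auto
  also have "\<dots> = ennreal 1"
    using nn_integral_eq_integral[OF p_int] p_nonneg p_one by simp
  finally show "(\<integral>\<^sup>+x. ennreal (q x) \<partial>lborel) < \<infinity>" by simp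
qed

lemma q_one: "(\<integral>w. q w \<partial>lborel) = 1"
  using push[of "\<lambda>_. 1"] p_one by simp

lemma grad_q_zero: "q w = 0 \<Longrightarrow> grad q w = 0"
  using deriv_zero_at_min[of q w, OF q_nonneg _ q_diff] by (simp add: grad_def vec_eq_iff)

lemma pgrad_zero: "p x = 0 \<Longrightarrow> partial_grad p i x = 0"
  using deriv_zero_at_min[of p x, OF p_nonneg _ p_diff] by (simp add: partial_grad_def vec_eq_iff)

lemma grad_q_norm_int: "integrable lborel (\<lambda>w. norm (grad q w))"
proof (rule Bochner_Integration.integrable_bound[where f="\<lambda>w. ((norm (grad q w))\<^sup>2 / q w + q w) / 2"])
  show "integrable lborel (\<lambda>w. ((norm (grad q w))\<^sup>2 / q w + q w) / 2)"
    using fisher_W_finite q_int by auto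
  show "(\<lambda>w. norm (grad q w)) \<in> borel_measurable lborel"
    using borel_measurable_continuous_onI[OF q_C1] by measurable
  show "AE w in lborel. norm (norm (grad q w)) \<le> norm (((norm (grad q w))\<^sup>2 / q w + q w) / 2)"
  proof (rule AE_I2)
    fix w
    have "\<bar>norm (grad q w)\<bar> \<le> ((norm (grad q w))\<^sup>2 / q w + q w) / 2"
      by (rule amgm_div) (auto simp: q_nonneg grad_q_zero)
    then show "norm (norm (grad q w)) \<le> norm (((norm (grad q w))\<^sup>2 / q w + q w) / 2)" by simp
  qed
qed

lemma pgrad_norm_int: "integrable lborel (\<lambda>x. norm (partial_grad p i x))"
proof (rule Bochner_Integration.integrable_bound[where f="\<lambda>x. ((norm (partial_grad p i x))\<^sup>2 / p x + p x) / 2"])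
  show "integrable lborel (\<lambda>x. ((norm (partial_grad p i x))\<^sup>2 / p x + p x) / 2)"
    using fisher_X_finite p_int by auto
  show "(\<lambda>x. norm (partial_grad p i x)) \<in> borel_measurable lborel"
    using borel_measurable_continuous_onI[OF p_C1] by measurable
  show "AE x in lborel. norm (norm (partial_grad p i x)) \<le> norm (((norm (partial_grad p i x))\<^sup>2 / p x + p x) / 2)"
  proof (rule AE_I2)
    fix x
    have "\<bar>norm (partial_grad p i x)\<bar> \<le> ((norm (partial_grad p i x))\<^sup>2 / p x + p x) / 2"
      by (rule amgm_div) (auto simp: p_nonneg pgrad_zero)
    then show "norm (norm (partial_grad p i x)) \<le> norm (((norm (partial_grad p i x))\<^sup>2 / p x + p x) / 2)" by simp
  qed
qed

lemma Dq_cont: "continuous_on UNIV (\<lambda>w. grad q w $ k)"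
  by (intro continuous_on_component q_C1)

lemma Dp_cont: "continuous_on UNIV (\<lambda>x. partial_grad p i x $ k)"
  by (intro continuous_on_component p_C1)

lemma Dq_int: "integrable lborel (\<lambda>w. grad q w $ k)"
  by (rule Bochner_Integration.integrable_bound[OF grad_q_norm_int])
     (use borel_measurable_continuous_onI[OF Dq_cont] in \<open>auto intro!: AE_I2 component_le_norm_cart\<close>)

lemma Dp_int: "integrable lborel (\<lambda>x. partial_grad p i x $ k)"
  by (rule Bochner_Integration.integrable_bound[OF pgrad_norm_int])
     (use borel_measurable_continuous_onI[OF Dp_cont] in \<open>auto intro!: AE_I2 component_le_norm_cart\<close>)

end



lemma int_mult_bounded:
  fixes f g :: "'a \<Rightarrow> real"
  assumes "integrable M f" "g \<in> borel_measurable M" "\<And>x. \<bar>g x\<bar> \<le> B"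
  shows "integrable M (\<lambda>x. f x * g x)"
proof (rule Bochner_Integration.integrable_bound[where f="\<lambda>x. B * f x"])
  show "integrable M (\<lambda>x. B * f x)" using assms(1) by simp
  show "(\<lambda>x. f x * g x) \<in> borel_measurable M" using assms by measurable
  have B0: "0 \<le> B" using assms(3) order_trans abs_ge_zero by blast
  show "AE x in M. norm (f x * g x) \<le> norm (B * f x)"
  proof (rule AE_I2)
    fix x
    have "\<bar>f x\<bar> * \<bar>g x\<bar> \<le> \<bar>f x\<bar> * B" by (rule mult_left_mono[OF assms(3)]) simp
    then show "norm (f x * g x) \<le> norm (B * f x)" using B0 by (simp add: abs_mult mult.commute)
  qed
qed

context fisher_setting begin

lemma MI:
  fixes \<phi> :: "real^'d \<Rightarrow> real"
  assumes \<phi>c: "continuous_on UNIV \<phi>" and \<phi>b: "\<And>w. \<bar>\<phi> w\<bar> \<le> B"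
  shows "(\<integral>w. grad q w $ k * \<phi> w \<partial>lborel) = (\<integral>x. partial_grad p i x $ k * \<phi> (\<Sum>j\<in>UNIV. x $ j) \<partial>lborel)"
proof -
  define e :: "real^'d" where "e = axis k 1"
  define v :: "real^'d^'n" where "v = axis i e"
  let ?S = "\<lambda>x::real^'d^'n. \<Sum>j\<in>UNIV. x $ j"
  have Sv: "?S v = e" by (simp add: v_def sum_axis_vec)
  have Dq_def: "grad q w $ k = frechet_derivative q (at w) e" for w by (simp add: grad_def e_def)
  have Dp_def: "partial_grad p i x $ k = frechet_derivative p (at x) v" for x by (simp add: partial_grad_def v_def e_def)
  have \<phi>m[measurable]: "\<phi> \<in> borel_measurable borel" using \<phi>c by (rule borel_measurable_continuous_onI)
  have \<psi>c: "continuous_on UNIV (\<lambda>x. \<phi> (?S x))" by (rule continuous_on_compose2[OF \<phi>c cont_sumS]) auto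
  define \<Phi>q where "\<Phi>q s = (\<integral>w. grad q w $ k * \<phi> (w - s *\<^sub>R e) \<partial>lborel)" for s :: real
  define \<Phi>p where "\<Phi>p s = (\<integral>x. partial_grad p i x $ k * \<phi> (?S (x - s *\<^sub>R v)) \<partial>lborel)" for s :: real
  have \<Phi>q_c: "continuous_on UNIV \<Phi>q" unfolding \<Phi>q_def by (rule translate_cont[OF Dq_int \<phi>c \<phi>b])
  have \<Phi>p_c: "continuous_on UNIV \<Phi>p" unfolding \<Phi>p_def by (rule translate_cont[OF Dp_int \<psi>c \<phi>b])
  note LFq = line_fubini[OF q_diff Dq_def Dq_cont Dq_int \<phi>c \<phi>b]
  note LFp = line_fubini[OF p_diff Dp_def Dp_cont Dp_int \<psi>c \<phi>b]
  have qs_int: "integrable lborel (\<lambda>w. q (w + c))" for c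
    using lborel_integrable_translate[OF q_meas] q_int by blast
  have ps_int: "integrable lborel (\<lambda>x. p (x + c))" for c
    using lborel_integrable_translate[OF p_meas] p_int by blast
  have key: "(\<integral>w. (q (w + t *\<^sub>R e) - q w) * \<phi> w \<partial>lborel) = (\<integral>x. (p (x + t *\<^sub>R v) - p x) * \<phi> (?S x) \<partial>lborel)" for t
  proof -
    have I1: "integrable lborel (\<lambda>w. q (w + t *\<^sub>R e) * \<phi> w)"
      by (rule int_mult_bounded[OF qs_int _ \<phi>b]) simp
    have I2: "integrable lborel (\<lambda>w. q w * \<phi> w)"
      by (rule int_mult_bounded[OF q_int _ \<phi>b]) simp
    have I3: "integrable lborel (\<lambda>x. p (x + t *\<^sub>R v) * \<phi> (?S x))"
      by (rule int_mult_bounded[OF ps_int _ \<phi>b]) simp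
    have I4: "integrable lborel (\<lambda>x. p x * \<phi> (?S x))"
      by (rule int_mult_bounded[OF p_int _ \<phi>b]) simp
    have "(\<integral>w. (q (w + t *\<^sub>R e) - q w) * \<phi> w \<partial>lborel) = (\<integral>w. q (w + t *\<^sub>R e) * \<phi> w \<partial>lborel) - (\<integral>w. q w * \<phi> w \<partial>lborel)"
      using Bochner_Integration.integral_diff[OF I1 I2] by (simp add: left_diff_distrib)
    also have "(\<integral>w. q (w + t *\<^sub>R e) * \<phi> w \<partial>lborel) = (\<integral>w. q w * \<phi> (w - t *\<^sub>R e) \<partial>lborel)"
      using lborel_integral_translate[of "\<lambda>w. q w * \<phi> (w - t *\<^sub>R e)" "t *\<^sub>R e"] by simp
    also have "\<dots> = (\<integral>x. p x * \<phi> (?S x - t *\<^sub>R e) \<partial>lborel)"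
      by (rule push) simp
    also have "\<dots> = (\<integral>x. p (x + t *\<^sub>R v) * \<phi> (?S (x + t *\<^sub>R v) - t *\<^sub>R e) \<partial>lborel)"
      using lborel_integral_translate[of "\<lambda>x. p x * \<phi> (?S x - t *\<^sub>R e)" "t *\<^sub>R v"] by simp
    also have "\<dots> = (\<integral>x. p (x + t *\<^sub>R v) * \<phi> (?S x) \<partial>lborel)"
      by (simp only: sum_vec_linear Sv) simp
    also have "(\<integral>w. q w * \<phi> w \<partial>lborel) = (\<integral>x. p x * \<phi> (?S x) \<partial>lborel)"
      by (rule push) simp
    also have "(\<integral>x. p (x + t *\<^sub>R v) * \<phi> (?S x) \<partial>lborel) - (\<integral>x. p x * \<phi> (?S x) \<partial>lborel)
       = (\<integral>x. (p (x + t *\<^sub>R v) - p x) * \<phi> (?S x) \<partial>lborel)"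
      using Bochner_Integration.integral_diff[OF I3 I4] by (simp add: left_diff_distrib)
    finally show ?thesis .
  qed
  have eq: "(\<integral>s. indicator {0..t} s * (\<Phi>q s - \<Phi>p s) \<partial>lborel) = 0" if t: "0 \<le> t" for t
  proof -
    have a: "(\<integral>s. indicator {0..t} s * \<Phi>q s \<partial>lborel) = (\<integral>s. indicator {0..t} s * \<Phi>p s \<partial>lborel)"
      using LFq(2)[OF t] LFp(2)[OF t] key[of t] by (simp add: \<Phi>q_def \<Phi>p_def sum_vec_linear' Sv)
    have iq: "integrable lborel (\<lambda>s. indicator {0..t} s * \<Phi>q s)"
      using borel_integrable_atLeastAtMost[of 0 t \<Phi>q] \<Phi>q_c
      by (simp add: mult.commute continuous_on_eq_continuous_at)
    have ip: "integrable lborel (\<lambda>s. indicator {0..t} s * \<Phi>p s)"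
      using borel_integrable_atLeastAtMost[of 0 t \<Phi>p] \<Phi>p_c
      by (simp add: mult.commute continuous_on_eq_continuous_at)
    show ?thesis using Bochner_Integration.integral_diff[OF iq ip] a by (simp add: right_diff_distrib)
  qed
  have "\<Phi>q 0 - \<Phi>p 0 = 0"
    by (rule zero_from_integrals[of "\<lambda>s. \<Phi>q s - \<Phi>p s"]) (use \<Phi>q_c \<Phi>p_c eq in \<open>auto intro!: continuous_intros\<close>)
  then show ?thesis by (simp add: \<Phi>q_def \<Phi>p_def)
qed

end



lemma norm_prod_amgm:
  fixes u z a c :: real
  assumes "0 \<le> u" "0 \<le> z" "0 < a" "0 \<le> c" "c = 0 \<Longrightarrow> u = 0"
  shows "u * z \<le> (a * u\<^sup>2 / c + c * z\<^sup>2 / a) / 2"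
proof (cases "c = 0")
  case True then show ?thesis using assms by simp
next
  case False
  then have c: "c > 0" using assms by simp
  have "0 \<le> (a * u - c * z)\<^sup>2 / (a * c)" using c assms by simp
  also have "(a * u - c * z)\<^sup>2 / (a * c) = a * u\<^sup>2 / c + c * z\<^sup>2 / a - 2 * (u * z)"
    using c assms by (simp add: field_simps power2_eq_square)
  finally show ?thesis by simp
qed

lemma norm_sum_sq:
  fixes a :: "'i::finite \<Rightarrow> 'v::real_inner" and l :: "real^'i"
  shows "(norm (\<Sum>i\<in>UNIV. l $ i *\<^sub>R a i))\<^sup>2 = (\<Sum>i\<in>UNIV. \<Sum>j\<in>UNIV. l $ i * l $ j * (a i \<bullet> a j))"
proof -
  have "(norm (\<Sum>i\<in>UNIV. l $ i *\<^sub>R a i))\<^sup>2 = (\<Sum>i\<in>UNIV. l $ i *\<^sub>R a i) \<bullet> (\<Sum>j\<in>UNIV. l $ j *\<^sub>R a j)"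
    by (simp only: power2_norm_eq_inner)
  also have "\<dots> = (\<Sum>i\<in>UNIV. (l $ i *\<^sub>R a i) \<bullet> (\<Sum>j\<in>UNIV. l $ j *\<^sub>R a j))"
    by (rule inner_sum_left)
  also have "\<dots> = (\<Sum>i\<in>UNIV. \<Sum>j\<in>UNIV. (l $ i *\<^sub>R a i) \<bullet> (l $ j *\<^sub>R a j))"
    by (simp only: inner_sum_right)
  also have "\<dots> = (\<Sum>i\<in>UNIV. \<Sum>j\<in>UNIV. l $ i * l $ j * (a i \<bullet> a j))"
    by (intro sum.cong refl) (simp add: algebra_simps)
  finally show ?thesis .
qed

context fisher_setting begin

lemma pg_meas[measurable]: "partial_grad p i \<in> borel_measurable borel"
  by (rule borel_measurable_continuous_onI[OF p_C1])

lemma gq_meas[measurable]: "grad q \<in> borel_measurable borel"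
  by (rule borel_measurable_continuous_onI[OF q_C1])

lemma entry_int: "integrable lborel (\<lambda>x. (partial_grad p i x \<bullet> partial_grad p j x) / p x)"
proof (rule Bochner_Integration.integrable_bound[where f="\<lambda>x. ((norm (partial_grad p i x))\<^sup>2 / p x + (norm (partial_grad p j x))\<^sup>2 / p x) / 2"])
  show "integrable lborel (\<lambda>x. ((norm (partial_grad p i x))\<^sup>2 / p x + (norm (partial_grad p j x))\<^sup>2 / p x) / 2)"
    using fisher_X_finite[of i] fisher_X_finite[of j] by auto
  show "(\<lambda>x. (partial_grad p i x \<bullet> partial_grad p j x) / p x) \<in> borel_measurable lborel" by measurable
  show "AE x in lborel. norm ((partial_grad p i x \<bullet> partial_grad p j x) / p x) \<le>
      norm (((norm (partial_grad p i x))\<^sup>2 / p x + (norm (partial_grad p j x))\<^sup>2 / p x) / 2)"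
  proof (rule AE_I2)
    fix x
    let ?a = "partial_grad p i x" and ?b = "partial_grad p j x"
    have "\<bar>?a \<bullet> ?b\<bar> \<le> norm ?a * norm ?b" by (rule Cauchy_Schwarz_ineq2)
    also have "\<dots> \<le> ((norm ?a)\<^sup>2 + (norm ?b)\<^sup>2) / 2"
      using sum_squares_bound[of "norm ?a" "norm ?b"] by (simp add: power2_eq_square field_simps)
    finally have 1: "\<bar>?a \<bullet> ?b\<bar> \<le> ((norm ?a)\<^sup>2 + (norm ?b)\<^sup>2) / 2" .
    have "\<bar>?a \<bullet> ?b\<bar> / p x \<le> ((norm ?a)\<^sup>2 + (norm ?b)\<^sup>2) / 2 / p x"
      by (rule divide_right_mono[OF 1 p_nonneg])
    moreover have "0 \<le> ((norm ?a)\<^sup>2 / p x + (norm ?b)\<^sup>2 / p x) / 2" using p_nonneg[of x] by simp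
    ultimately show "norm ((?a \<bullet> ?b) / p x) \<le> norm (((norm ?a)\<^sup>2 / p x + (norm ?b)\<^sup>2 / p x) / 2)"
      using p_nonneg[of x] by (simp add: abs_div add_divide_distrib)
  qed
qed

lemma Q_formula:
  fixes l :: "real^'n"
  shows "(\<Sum>i\<in>UNIV. \<Sum>j\<in>UNIV. l $ i * l $ j * fisher_entry p i j)
     = (\<integral>x. (norm (\<Sum>i\<in>UNIV. l $ i *\<^sub>R partial_grad p i x))\<^sup>2 / p x \<partial>lborel)"
proof -
  have pt: "(norm (\<Sum>i\<in>UNIV. l $ i *\<^sub>R partial_grad p i x))\<^sup>2 / p x
      = (\<Sum>i\<in>UNIV. \<Sum>j\<in>UNIV. l $ i * l $ j * ((partial_grad p i x \<bullet> partial_grad p j x) / p x))" for x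
    by (simp add: norm_sum_sq sum_divide_distrib)
  have "(\<integral>x. (norm (\<Sum>i\<in>UNIV. l $ i *\<^sub>R partial_grad p i x))\<^sup>2 / p x \<partial>lborel)
     = (\<integral>x. (\<Sum>i\<in>UNIV. \<Sum>j\<in>UNIV. l $ i * l $ j * ((partial_grad p i x \<bullet> partial_grad p j x) / p x)) \<partial>lborel)"
    by (simp only: pt)
  also have "\<dots> = (\<Sum>i\<in>UNIV. \<integral>x. (\<Sum>j\<in>UNIV. l $ i * l $ j * ((partial_grad p i x \<bullet> partial_grad p j x) / p x)) \<partial>lborel)"
    by (rule Bochner_Integration.integral_sum) (intro Bochner_Integration.integrable_sum integrable_mult_right entry_int)
  also have "\<dots> = (\<Sum>i\<in>UNIV. \<Sum>j\<in>UNIV. \<integral>x. l $ i * l $ j * ((partial_grad p i x \<bullet> partial_grad p j x) / p x) \<partial>lborel)"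
    by (intro sum.cong refl Bochner_Integration.integral_sum integrable_mult_right entry_int)
  also have "\<dots> = (\<Sum>i\<in>UNIV. \<Sum>j\<in>UNIV. l $ i * l $ j * fisher_entry p i j)"
    by (simp only: integral_mult_right_zero fisher_entry_def)
  finally show ?thesis by simp
qed

lemma vec_identity:
  fixes l :: "real^'n" and \<psi> :: "real^'d \<Rightarrow> real^'d"
  assumes \<psi>c: "continuous_on UNIV \<psi>" and \<psi>b: "\<And>w k. \<bar>\<psi> w $ k\<bar> \<le> B"
  shows "(\<Sum>i\<in>UNIV. l $ i) * (\<integral>w. grad q w \<bullet> \<psi> w \<partial>lborel)
     = (\<integral>x. (\<Sum>i\<in>UNIV. l $ i *\<^sub>R partial_grad p i x) \<bullet> \<psi> (\<Sum>j\<in>UNIV. x $ j) \<partial>lborel)"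
proof -
  let ?S = "\<lambda>x::real^'d^'n. \<Sum>j\<in>UNIV. x $ j"
  have \<psi>m[measurable]: "\<psi> \<in> borel_measurable borel" using \<psi>c by (rule borel_measurable_continuous_onI)
  have ck: "continuous_on UNIV (\<lambda>w. \<psi> w $ k)" for k by (intro continuous_on_component \<psi>c)
  have i1: "integrable lborel (\<lambda>w. grad q w $ k * \<psi> w $ k)" for k
    by (rule int_mult_bounded[OF Dq_int _ \<psi>b]) (simp add: borel_measurable_continuous_onI[OF ck[of k]])
  have i2: "integrable lborel (\<lambda>x. partial_grad p i x $ k * \<psi> (?S x) $ k)" for i k
  proof -
    have "continuous_on UNIV (\<lambda>x. \<psi> (?S x) $ k)"
      by (intro continuous_on_component continuous_on_compose2[OF \<psi>c cont_sumS]) auto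
    then have "(\<lambda>x. \<psi> (?S x) $ k) \<in> borel_measurable borel" by (rule borel_measurable_continuous_onI)
    then show ?thesis by (intro int_mult_bounded[OF Dp_int _ \<psi>b]) simp
  qed
  have "(\<integral>w. grad q w \<bullet> \<psi> w \<partial>lborel) = (\<Sum>k\<in>UNIV. \<integral>w. grad q w $ k * \<psi> w $ k \<partial>lborel)"
    by (simp add: inner_vec_def integral_sum i1)
  also have "\<dots> = (\<Sum>k\<in>UNIV. \<integral>x. partial_grad p i x $ k * \<psi> (?S x) $ k \<partial>lborel)" for i
    using MI[OF ck \<psi>b] by simp
  finally have A: "(\<integral>w. grad q w \<bullet> \<psi> w \<partial>lborel) = (\<Sum>k\<in>UNIV. \<integral>x. partial_grad p i x $ k * \<psi> (?S x) $ k \<partial>lborel)" for i .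
  have "(\<Sum>i\<in>UNIV. l $ i) * (\<integral>w. grad q w \<bullet> \<psi> w \<partial>lborel)
      = (\<Sum>i\<in>UNIV. l $ i * (\<Sum>k\<in>UNIV. \<integral>x. partial_grad p i x $ k * \<psi> (?S x) $ k \<partial>lborel))"
    unfolding sum_distrib_right
    apply (intro sum.cong refl)
    subgoal for i using A[of i] by simp
    done
  also have "\<dots> = (\<integral>x. (\<Sum>i\<in>UNIV. l $ i * (\<Sum>k\<in>UNIV. partial_grad p i x $ k * \<psi> (?S x) $ k)) \<partial>lborel)"
    by (simp add: Bochner_Integration.integral_sum i2 Bochner_Integration.integrable_sum)
  also have "\<dots> = (\<integral>x. (\<Sum>i\<in>UNIV. l $ i *\<^sub>R partial_grad p i x) \<bullet> \<psi> (?S x) \<partial>lborel)"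
    by (simp only: inner_sum_left inner_scaleR_left) (simp only: inner_vec_def inner_real_def)
  finally show ?thesis .
qed

end



lemma quad_from_amgm:
  fixes L A Q :: real
  assumes A0: "0 \<le> A" and Q0: "0 \<le> Q" and h: "\<And>a. 0 < a \<Longrightarrow> \<bar>L\<bar> * A \<le> (a * Q + A / a) / 2"
  shows "L\<^sup>2 * A \<le> Q"
proof (cases "L = 0")
  case True then show ?thesis using Q0 by simp
next
  case False
  then have L: "\<bar>L\<bar> > 0" by simp
  have "\<bar>L\<bar> * A \<le> ((1/\<bar>L\<bar>) * Q + A / (1/\<bar>L\<bar>)) / 2" using h[of "1/\<bar>L\<bar>"] L by simp
  then have "\<bar>L\<bar> * A \<le> Q / \<bar>L\<bar>" by (simp add: field_simps)
  then have "\<bar>L\<bar> * (\<bar>L\<bar> * A) \<le> Q" using L by (simp add: field_simps)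
  then show ?thesis by (simp add: power2_eq_square abs_mult_self mult.assoc[symmetric])
qed

context fisher_setting begin

lemma q_cont: "continuous_on UNIV q"
  by (rule differentiable_imp_continuous_on) (use q_diff in \<open>auto simp: differentiable_on_def differentiable_at_withinI\<close>)

lemma part1:
  fixes l :: "real^'n"
  shows "(\<Sum>i\<in>UNIV. l $ i)\<^sup>2 * fisher_info q \<le> (\<Sum>i\<in>UNIV. \<Sum>j\<in>UNIV. l $ i * l $ j * fisher_entry p i j)"
proof -
  let ?S = "\<lambda>x::real^'d^'n. \<Sum>j\<in>UNIV. x $ j"
  define L where "L = (\<Sum>i\<in>UNIV. l $ i)"
  define G where "G x = (\<Sum>i\<in>UNIV. l $ i *\<^sub>R partial_grad p i x)" for x
  define Q where "Q = (\<integral>x. (norm (G x))\<^sup>2 / p x \<partial>lborel)"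
  have QF: "(\<Sum>i\<in>UNIV. \<Sum>j\<in>UNIV. l $ i * l $ j * fisher_entry p i j) = Q"
    unfolding Q_def G_def by (rule Q_formula)
  have G_meas[measurable]: "G \<in> borel_measurable borel" unfolding G_def[abs_def] by measurable
  have GQ_int: "integrable lborel (\<lambda>x. (norm (G x))\<^sup>2 / p x)"
  proof -
    have pt: "(\<lambda>x. (norm (G x))\<^sup>2 / p x)
      = (\<lambda>x. \<Sum>i\<in>UNIV. \<Sum>j\<in>UNIV. l $ i * l $ j * ((partial_grad p i x \<bullet> partial_grad p j x) / p x))"
      by (simp add: G_def norm_sum_sq sum_divide_distrib)
    show ?thesis unfolding pt by (intro Bochner_Integration.integrable_sum integrable_mult_right entry_int)
  qed
  have Q0: "0 \<le> Q" unfolding Q_def by (rule integral_nonneg_AE) (auto intro!: AE_I2 divide_nonneg_nonneg p_nonneg)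
  have G_zero: "p x = 0 \<Longrightarrow> G x = 0" for x by (simp add: G_def pgrad_zero)
  define \<epsilon> where "\<epsilon> m = inverse (real (Suc m))" for m :: nat
  have \<epsilon>pos: "0 < \<epsilon> m" for m by (simp add: \<epsilon>_def)
  define den where "den m w = max (q w) (max (\<epsilon> m) (\<epsilon> m * norm (grad q w)))" for m w
  define \<psi> where "\<psi> m w = (1 / den m w) *\<^sub>R grad q w" for m w
  define h where "h m w = (norm (grad q w))\<^sup>2 / den m w" for m w
  define f where "f w = (norm (grad q w))\<^sup>2 / q w" for w
  have den_pos: "0 < den m w" for m w using \<epsilon>pos[of m] by (simp add: den_def)
  have den_q: "q w \<le> den m w" for m w by (simp add: den_def)
  have \<psi>_norm: "norm (\<psi> m w) \<le> real (Suc m)" for m w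
  proof -
    have "norm (grad q w) = real (Suc m) * (\<epsilon> m * norm (grad q w))" by (simp add: \<epsilon>_def field_simps)
    then have "norm (grad q w) \<le> real (Suc m) * (\<epsilon> m * norm (grad q w))" by (rule eq_refl)
    also have "\<dots> \<le> real (Suc m) * den m w" by (intro mult_left_mono) (auto simp: den_def)
    finally have "norm (grad q w) / den m w \<le> real (Suc m)" using den_pos[of m w] by (simp add: pos_divide_le_eq mult.commute)
    then show ?thesis using den_pos[of m w] by (simp add: \<psi>_def)
  qed
  have \<psi>_norm': "norm (\<psi> m w) \<le> 1 + real m" for m w using \<psi>_norm[of m w] by simp
  have \<psi>_comp: "\<bar>\<psi> m w $ k\<bar> \<le> real (Suc m)" for m w k
    using component_le_norm_cart[of "\<psi> m w" k] \<psi>_norm[of m w] by linarith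
  have \<psi>_cont: "continuous_on UNIV (\<psi> m)" for m
    unfolding \<psi>_def[abs_def] den_def
    using den_pos[of m, unfolded den_def]
    by (intro continuous_intros q_cont q_C1) (metis less_irrefl)
  have \<psi>_meas[measurable]: "\<psi> m \<in> borel_measurable borel" for m by (rule borel_measurable_continuous_onI[OF \<psi>_cont])
  have h_meas[measurable]: "h m \<in> borel_measurable borel" for m unfolding h_def[abs_def] den_def \<epsilon>_def by measurable
  have gh: "grad q w \<bullet> \<psi> m w = h m w" for m w
    by (simp add: \<psi>_def h_def power2_norm_eq_inner)
  have qh: "q w * (norm (\<psi> m w))\<^sup>2 \<le> h m w" for m w
  proof -
    have "q w * (norm (\<psi> m w))\<^sup>2 = (q w / den m w) * h m w"
      using den_pos[of m w] by (simp add: \<psi>_def h_def power2_eq_square field_simps)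
    also have "\<dots> \<le> 1 * h m w"
      using den_pos[of m w] den_q[of w m] q_nonneg[of w]
      by (intro mult_right_mono) (auto simp: h_def divide_le_eq_1)
    finally show ?thesis by simp
  qed
  have h_nonneg: "0 \<le> h m w" for m w using den_pos[of m w] by (simp add: h_def)
  have h_le: "h m w \<le> f w" for m w
  proof (cases "q w = 0")
    case True then show ?thesis by (simp add: h_def f_def grad_q_zero)
  next
    case False
    then have "0 < q w" using q_nonneg[of w] by simp
    then show ?thesis unfolding h_def f_def using den_pos[of m w] by (intro divide_left_mono den_q) auto
  qed
  have h_int: "integrable lborel (h m)" for m
    by (rule Bochner_Integration.integrable_bound[OF fisher_W_finite])
       (auto intro!: AE_I2 simp: abs_of_nonneg h_nonneg f_def[symmetric] order.trans[OF h_le] h_le)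
  define A where "A m = (\<integral>w. h m w \<partial>lborel)" for m
  have A0: "0 \<le> A m" for m unfolding A_def by (rule integral_nonneg_AE) (auto intro!: AE_I2 h_nonneg)
  have bound: "L\<^sup>2 * A m \<le> Q" for m
  proof (rule quad_from_amgm[OF A0 Q0])
    fix a :: real assume a: "0 < a"
    have ident: "L * A m = (\<integral>x. G x \<bullet> \<psi> m (?S x) \<partial>lborel)"
      using vec_identity[OF \<psi>_cont \<psi>_comp, of l] by (simp add: L_def G_def A_def gh)
    define b where "b x = (a * ((norm (G x))\<^sup>2 / p x) + (p x * (norm (\<psi> m (?S x)))\<^sup>2) / a) / 2" for x
    have pn_int: "integrable lborel (\<lambda>x. p x * (norm (\<psi> m (?S x)))\<^sup>2)"
      by (rule int_mult_bounded[OF p_int, where B="(real (Suc m))\<^sup>2"])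
         (auto intro!: power_mono \<psi>_norm')
    have qn_int: "integrable lborel (\<lambda>w. q w * (norm (\<psi> m w))\<^sup>2)"
      by (rule int_mult_bounded[OF q_int, where B="(real (Suc m))\<^sup>2"])
         (auto intro!: power_mono \<psi>_norm')
    have b1: "integrable lborel (\<lambda>x. a * ((norm (G x))\<^sup>2 / p x))"
      using GQ_int by (rule integrable_mult_right)
    have b2: "integrable lborel (\<lambda>x. (p x * (norm (\<psi> m (?S x)))\<^sup>2) / a)"
      using pn_int by (rule integrable_divide_zero)
    have b12: "integrable lborel (\<lambda>x. a * ((norm (G x))\<^sup>2 / p x) + (p x * (norm (\<psi> m (?S x)))\<^sup>2) / a)"
      by (rule Bochner_Integration.integrable_add[OF b1 b2])
    have b_int: "integrable lborel b"
      unfolding b_def[abs_def] by (rule integrable_divide_zero[OF b12])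
    have pb: "\<bar>G x \<bullet> \<psi> m (?S x)\<bar> \<le> b x" for x
    proof -
      have "\<bar>G x \<bullet> \<psi> m (?S x)\<bar> \<le> norm (G x) * norm (\<psi> m (?S x))" by (rule Cauchy_Schwarz_ineq2)
      also have "\<dots> \<le> (a * (norm (G x))\<^sup>2 / p x + p x * (norm (\<psi> m (?S x)))\<^sup>2 / a) / 2"
        using p_nonneg[of x] G_zero[of x] a
        by (intro norm_prod_amgm) auto
      also have "\<dots> = b x" unfolding b_def by simp
      finally show ?thesis .
    qed
    have gi_meas: "(\<lambda>x. G x \<bullet> \<psi> m (?S x)) \<in> borel_measurable lborel" by measurable
    have gi_int: "integrable lborel (\<lambda>x. G x \<bullet> \<psi> m (?S x))"
    proof (rule Bochner_Integration.integrable_bound[OF b_int gi_meas])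
      show "AE x in lborel. norm (G x \<bullet> \<psi> m (?S x)) \<le> norm (b x)"
      proof (rule AE_I2)
        fix x
        show "norm (G x \<bullet> \<psi> m (?S x)) \<le> norm (b x)" using pb[of x] by simp
      qed
    qed
    have c1: "\<bar>L\<bar> * A m \<le> (\<integral>x. b x \<partial>lborel)"
    proof -
      have "\<bar>L\<bar> * A m = \<bar>L * A m\<bar>" using A0[of m] by (simp add: abs_mult)
      also have "\<dots> = \<bar>\<integral>x. G x \<bullet> \<psi> m (?S x) \<partial>lborel\<bar>" by (simp only: ident)
      also have "\<dots> \<le> (\<integral>x. b x \<partial>lborel)"
        by (rule integral_abs_bound_integral[OF gi_int b_int pb])
      finally show ?thesis .
    qed
    have c2: "(\<integral>x. b x \<partial>lborel) = (a * Q + (\<integral>x. p x * (norm (\<psi> m (?S x)))\<^sup>2 \<partial>lborel) / a) / 2"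
    proof -
      have "(\<integral>x. b x \<partial>lborel) = (\<integral>x. a * ((norm (G x))\<^sup>2 / p x) + (p x * (norm (\<psi> m (?S x)))\<^sup>2) / a \<partial>lborel) / 2"
        unfolding b_def by (rule integral_divide_zero)
      also have "(\<integral>x. a * ((norm (G x))\<^sup>2 / p x) + (p x * (norm (\<psi> m (?S x)))\<^sup>2) / a \<partial>lborel)
          = (\<integral>x. a * ((norm (G x))\<^sup>2 / p x) \<partial>lborel) + (\<integral>x. (p x * (norm (\<psi> m (?S x)))\<^sup>2) / a \<partial>lborel)"
        by (rule Bochner_Integration.integral_add[OF b1 b2])
      also have "(\<integral>x. a * ((norm (G x))\<^sup>2 / p x) \<partial>lborel) = a * Q"
        unfolding Q_def by (rule integral_mult_right_zero)
      also have "(\<integral>x. (p x * (norm (\<psi> m (?S x)))\<^sup>2) / a \<partial>lborel) = (\<integral>x. p x * (norm (\<psi> m (?S x)))\<^sup>2 \<partial>lborel) / a"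
        by (rule integral_divide_zero)
      finally show ?thesis .
    qed
    have c3: "(\<integral>x. p x * (norm (\<psi> m (?S x)))\<^sup>2 \<partial>lborel) = (\<integral>w. q w * (norm (\<psi> m w))\<^sup>2 \<partial>lborel)"
      by (rule push[symmetric]) simp
    have c4: "(\<integral>w. q w * (norm (\<psi> m w))\<^sup>2 \<partial>lborel) \<le> A m"
      unfolding A_def by (rule integral_mono[OF qn_int h_int qh])
    have c5: "(\<integral>w. q w * (norm (\<psi> m w))\<^sup>2 \<partial>lborel) / a \<le> A m / a"
      using c4 a by (rule divide_right_mono[OF _ less_imp_le])
    have c6: "\<bar>L\<bar> * A m \<le> (a * Q + (\<integral>w. q w * (norm (\<psi> m w))\<^sup>2 \<partial>lborel) / a) / 2"
      using c1 unfolding c2 c3 .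
    have c7: "(a * Q + (\<integral>w. q w * (norm (\<psi> m w))\<^sup>2 \<partial>lborel) / a) / 2 \<le> (a * Q + A m / a) / 2"
      by (rule divide_right_mono[OF add_left_mono[OF c5]]) simp
    show "\<bar>L\<bar> * A m \<le> (a * Q + A m / a) / 2"
      using c6 c7 by (rule order.trans)
  qed
  have lim: "A \<longlonglongrightarrow> fisher_info q"
    unfolding A_def fisher_info_def
  proof (rule integral_dominated_convergence[where w=f])
    show "(\<lambda>w. (norm (grad q w))\<^sup>2 / q w) \<in> borel_measurable lborel" by measurable
    show "h m \<in> borel_measurable lborel" for m by simp
    show "integrable lborel f" using fisher_W_finite by (simp add: f_def[abs_def])
    show "AE w in lborel. norm (h m w) \<le> f w" for m
      by (auto intro!: AE_I2 simp: abs_of_nonneg h_nonneg h_le)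
    show "AE w in lborel. (\<lambda>m. h m w) \<longlonglongrightarrow> (norm (grad q w))\<^sup>2 / q w"
    proof (rule AE_I2)
      fix w
      show "(\<lambda>m. h m w) \<longlonglongrightarrow> (norm (grad q w))\<^sup>2 / q w"
      proof (cases "q w = 0")
        case True then show ?thesis by (simp add: h_def grad_q_zero)
      next
        case False
        then have qp: "0 < q w" using q_nonneg[of w] by simp
        have e0: "\<epsilon> \<longlonglongrightarrow> 0" unfolding \<epsilon>_def[abs_def] by (rule LIMSEQ_inverse_real_of_nat)
        have "(\<lambda>m. den m w) \<longlonglongrightarrow> max (q w) (max 0 (0 * norm (grad q w)))"
          unfolding den_def by (intro tendsto_intros e0)
        then have "(\<lambda>m. den m w) \<longlonglongrightarrow> q w" using qp by simp
        then show ?thesis unfolding h_def using False by (intro tendsto_intros) auto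
      qed
    qed
  qed
  have "L\<^sup>2 * fisher_info q \<le> Q"
    by (rule LIMSEQ_le_const2[OF tendsto_mult[OF tendsto_const lim]]) (use bound in auto)
  then show ?thesis using QF L_def by simp
qed

end



lemma cont_AE_zero:
  fixes g :: "'a::euclidean_space \<Rightarrow> real"
  assumes c: "continuous_on UNIV g" and ae: "AE x in lborel. g x = 0"
  shows "g x0 = 0"
proof (rule ccontr)
  assume ne: "g x0 \<noteq> 0"
  define U where "U = {x. g x \<noteq> 0}"
  have oU: "open U" unfolding U_def by (rule open_Collect_neq[OF c continuous_on_const])
  have x0U: "x0 \<in> U" using ne by (simp add: U_def)
  obtain r where r: "r > 0" "ball x0 r \<subseteq> U" using open_contains_ball_eq[OF oU] x0U by blast
  have Us: "U \<in> sets lborel" using oU by simp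
  have "emeasure lborel U = 0"
    using AE_iff_measurable[OF Us, of "\<lambda>x. g x = 0"] ae by (simp add: U_def)
  moreover have "emeasure lborel (ball x0 r) \<le> emeasure lborel U"
    by (rule emeasure_mono[OF r(2) Us])
  moreover have "0 < emeasure lborel (ball x0 r)"
    using r(1) by (simp add: emeasure_ball)
  ultimately show False by simp
qed

lemma inv_right:
  fixes A :: "real^'n^'n"
  assumes "invertible A"
  shows "A ** matrix_inv A = mat 1"
  using someI_ex[OF assms[unfolded invertible_def]] unfolding matrix_inv_def by blast

context fisher_setting begin

lemma J_pos: "0 < fisher_info q"
proof -
  define f where "f w = (norm (grad q w))\<^sup>2 / q w" for w
  have f0: "0 \<le> f w" for w by (simp add: f_def q_nonneg)
  have J0: "0 \<le> fisher_info q" unfolding fisher_info_def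
    by (rule integral_nonneg_AE) (auto intro!: AE_I2 simp: q_nonneg)
  have "fisher_info q \<noteq> 0"
  proof
    assume J: "fisher_info q = 0"
    have "AE w in lborel. f w = 0"
      using integral_nonneg_eq_0_iff_AE[of lborel f] fisher_W_finite J f0
      by (simp add: f_def[abs_def] fisher_info_def)
    then have ae: "AE w in lborel. norm (grad q w) = 0"
    proof (rule eventually_mono)
      fix w assume "f w = 0"
      then show "norm (grad q w) = 0"
        by (cases "q w = 0") (auto simp: f_def grad_q_zero)
    qed
    have gc: "continuous_on UNIV (\<lambda>w. norm (grad q w))"
      by (intro continuous_intros q_C1)
    have g0: "grad q w = 0" for w using cont_AE_zero[OF gc ae, of w] by simp
    have fd0: "frechet_derivative q (at w) = (\<lambda>h. 0)" for w
    proof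
      fix h :: "real^'d"
      have lin: "linear (frechet_derivative q (at w))"
        using q_diff frechet_derivative_works has_derivative_linear by blast
      have ax: "frechet_derivative q (at w) (axis k 1) = 0" for k
        using g0[of w] by (simp add: grad_def vec_eq_iff)
      have "frechet_derivative q (at w) h = frechet_derivative q (at w) (\<Sum>k\<in>UNIV. h $ k *\<^sub>R axis k 1)"
        using basis_expansion[of h] by (simp add: scalar_mult_eq_scaleR)
      also have "\<dots> = (\<Sum>k\<in>UNIV. h $ k * frechet_derivative q (at w) (axis k 1))"
        using lin by (simp add: linear_sum linear_scale)
      also have "\<dots> = 0" by (simp add: ax)
      finally show "frechet_derivative q (at w) h = 0" .
    qed
    have "\<exists>c. \<forall>x\<in>UNIV. q x = c"
    proof (rule has_derivative_zero_constant[OF convex_UNIV])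
      fix x :: "real^'d" assume "x \<in> UNIV"
      have "(q has_derivative frechet_derivative q (at x)) (at x)"
        using q_diff frechet_derivative_works by blast
      then show "(q has_derivative (\<lambda>h. 0)) (at x within UNIV)" using fd0[of x] by simp
    qed
    then obtain c where c: "\<And>x. q x = c" by blast
    have "(\<integral>w. q w \<partial>lborel) = 0"
      by (simp add: c measure_def)
    then show False using q_one by simp
  qed
  then show ?thesis using J0 by simp
qed

lemma part2:
  assumes inv: "invertible (fisher_matrix p)"
  shows "1 / fisher_info q \<ge> vec 1 \<bullet> (matrix_inv (fisher_matrix p) *v vec 1)"
proof -
  define M where "M = fisher_matrix p"
  define \<mu> where "\<mu> = matrix_inv M *v vec 1"
  define s where "s = vec 1 \<bullet> \<mu>"
  define J where "J = fisher_info q"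
  have Jp: "0 < J" unfolding J_def by (rule J_pos)
  have M\<mu>: "M *v \<mu> = vec 1"
    unfolding \<mu>_def matrix_vector_mul_assoc inv_right[OF inv[folded M_def]] by simp
  have s_sum: "s = (\<Sum>i\<in>UNIV. \<mu> $ i)" by (simp add: s_def inner_vec_def)
  have quad: "(\<Sum>i\<in>UNIV. \<Sum>j\<in>UNIV. \<mu> $ i * \<mu> $ j * fisher_entry p i j) = s"
  proof -
    have row: "(\<Sum>j\<in>UNIV. fisher_entry p i j * \<mu> $ j) = 1" for i
      using arg_cong[OF M\<mu>, of "\<lambda>v. v $ i"]
      by (simp add: matrix_vector_mult_def M_def fisher_matrix_def)
    have "(\<Sum>i\<in>UNIV. \<Sum>j\<in>UNIV. \<mu> $ i * \<mu> $ j * fisher_entry p i j)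
        = (\<Sum>i\<in>UNIV. \<mu> $ i * (\<Sum>j\<in>UNIV. fisher_entry p i j * \<mu> $ j))"
      by (simp add: sum_distrib_left mult_ac)
    also have "\<dots> = s" by (simp add: row s_sum)
    finally show ?thesis .
  qed
  have h: "s\<^sup>2 * J \<le> s" using part1[of \<mu>] quad s_sum by (simp add: J_def)
  have "s \<le> 1 / J"
  proof (cases "s \<le> 0")
    case True then show ?thesis using Jp by (meson dual_order.trans less_imp_le zero_le_divide_1_iff)
  next
    case False
    then have sp: "0 < s" by simp
    have "s * (s * J) \<le> s * 1" using h by (simp add: power2_eq_square mult.assoc)
    then have "s * J \<le> 1" using sp by simp
    then show ?thesis using Jp by (simp add: pos_le_divide_eq)
  qed
  then show ?thesis by (simp add: s_def \<mu>_def M_def J_def)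
qed

end

theorem proposition1:
  fixes p :: "real^'d^'n \<Rightarrow> real" and q :: "real^'d \<Rightarrow> real"
  assumes p_nonneg: "\<And>x. 0 \<le> p x"
    and p_int: "integrable lborel p" and p_one: "(\<integral>x. p x \<partial>lborel) = 1"
    and p_diff: "\<And>x. p differentiable (at x)"
    and p_C1: "\<And>i. continuous_on UNIV (partial_grad p i)"
    and q_nonneg: "\<And>w. 0 \<le> q w"
    and W_density: "distributed (density lborel (\<lambda>x. ennreal (p x))) lborel
                       (\<lambda>x. \<Sum>i\<in>UNIV. x $ i) (\<lambda>w. ennreal (q w))"
    and q_diff: "\<And>w. q differentiable (at w)"
    and q_C1: "continuous_on UNIV (grad q)"
    and moment2: "integrable lborel (\<lambda>x. (norm x)\<^sup>2 * p x)"
    and entropy_X: "integrable lborel (\<lambda>x. p x * ln (p x))"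
    and entropy_W: "integrable lborel (\<lambda>w. q w * ln (q w))"
    and fisher_X_finite: "\<And>i. integrable lborel (\<lambda>x. (norm (partial_grad p i x))\<^sup>2 / p x)"
    and fisher_W_finite: "integrable lborel (\<lambda>w. (norm (grad q w))\<^sup>2 / q w)"
  shows "(\<forall>l :: real^'n. (\<Sum>i\<in>UNIV. l $ i)\<^sup>2 * fisher_info q
            \<le> (\<Sum>i\<in>UNIV. \<Sum>j\<in>UNIV. l $ i * l $ j * fisher_entry p i j))
       \<and> (invertible (fisher_matrix p) \<longrightarrow>
            1 / fisher_info q \<ge> vec 1 \<bullet> (matrix_inv (fisher_matrix p) *v vec 1))"
proof -
  have FS: "fisher_setting p q"
    unfolding fisher_setting_def
    using p_nonneg p_int p_one p_diff p_C1 q_nonneg W_density q_diff q_C1 fisher_X_finite fisher_W_finite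
    by blast
  show ?thesis
    using fisher_setting.part1[OF FS] fisher_setting.part2[OF FS] by blast
qed

end
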